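(* Let $S$ be an anti-rectangular AG-groupoid. A nonempty subset $I\subseteq S$ is a left ideal of $S$ if and only if it is a right ideal of $S$.
   Context: An AG-groupoid is a set $S$ with a binary operation satisfying $(ab)c=(cb)a$ for all $a,b,c\in S$. It is anti-rectangular if $a=(ba)b$ for all $a,b\in S$. For nonempty subsets, $AB=\{ab:a\in A,b\in B\}$. A left ideal is a nonempty subset $I$ with $SI\subseteq I$; a right ideal is a nonempty subset $I$ with $IS\subseteq I$. *)

theory Defs
  imports Main
begin

definition AG_groupoid :: "'a set \<Rightarrow> ('a \<Rightarrow> 'a \<Rightarrow> 'a) \<Rightarrow> bool" where
  "AG_groupoid S m \<longleftrightarrow> (\<forall>a\<in>S. \<forall>b\<in>S. m a b \<in> S) \<and>
     (\<forall>a\<in>S. \<forall>b\<in>S. \<forall>c\<in>S. m (m a b) c = m (m c b) a)"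

definition anti_rectangular :: "'a set \<Rightarrow> ('a \<Rightarrow> 'a \<Rightarrow> 'a) \<Rightarrow> bool" where
  "anti_rectangular S m \<longleftrightarrow> (\<forall>a\<in>S. \<forall>b\<in>S. a = m (m b a) b)"

definition set_prod :: "('a \<Rightarrow> 'a \<Rightarrow> 'a) \<Rightarrow> 'a set \<Rightarrow> 'a set \<Rightarrow> 'a set" where
  "set_prod m A B = {m a b | a b. a \<in> A \<and> b \<in> B}"

definition left_ideal :: "'a set \<Rightarrow> ('a \<Rightarrow> 'a \<Rightarrow> 'a) \<Rightarrow> 'a set \<Rightarrow> bool" where
  "left_ideal S m I \<longleftrightarrow> I \<noteq> {} \<and> I \<subseteq> S \<and> set_prod m S I \<subseteq> I"

definition right_ideal :: "'a set \<Rightarrow> ('a \<Rightarrow> 'a \<Rightarrow> 'a) \<Rightarrow> 'a set \<Rightarrow> bool" where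
  "right_ideal S m I \<longleftrightarrow> I \<noteq> {} \<and> I \<subseteq> S \<and> set_prod m I S \<subseteq> I"

end

theory Submission
  imports Defs
begin

theorem lemma3:
  fixes S :: "'a set" and m :: "'a \<Rightarrow> 'a \<Rightarrow> 'a" and I :: "'a set"
  assumes "AG_groupoid S m"
    and "anti_rectangular S m"
    and "I \<noteq> {}" and "I \<subseteq> S"
  shows "left_ideal S m I \<longleftrightarrow> right_ideal S m I"
proof -
  have cl: "\<And>a b. a \<in> S \<Longrightarrow> b \<in> S \<Longrightarrow> m a b \<in> S"
    and lil: "\<And>a b c. a \<in> S \<Longrightarrow> b \<in> S \<Longrightarrow> c \<in> S \<Longrightarrow> m (m a b) c = m (m c b) a"
    using assms(1) unfolding AG_groupoid_def by blast+
  have ar: "\<And>a b. a \<in> S \<Longrightarrow> b \<in> S \<Longrightarrow> a = m (m b a) b"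
    using assms(2) unfolding anti_rectangular_def by blast
  show ?thesis
  proof
    assume L: "left_ideal S m I"
    hence Lm: "\<And>s i. s \<in> S \<Longrightarrow> i \<in> I \<Longrightarrow> m s i \<in> I"
      unfolding left_ideal_def set_prod_def by blast
    have "m i s \<in> I" if i: "i \<in> I" and s: "s \<in> S" for i s
    proof -
      have iS: "i \<in> S" using i assms(4) by blast
      have "m i s = m (m (m s i) s) s" using ar[OF iS s] by simp
      also have "\<dots> = m (m s s) (m s i)" using lil[OF cl[OF s iS] s s] by simp
      finally show ?thesis using Lm[OF cl[OF s s] Lm[OF s i]] by simp
    qed
    thus "right_ideal S m I" using assms(3,4) unfolding right_ideal_def set_prod_def by blast
  next
    assume R: "right_ideal S m I"
    hence Rm: "\<And>s i. s \<in> S \<Longrightarrow> i \<in> I \<Longrightarrow> m i s \<in> I"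
      unfolding right_ideal_def set_prod_def by blast
    have "m s i \<in> I" if i: "i \<in> I" and s: "s \<in> S" for i s
    proof -
      have iS: "i \<in> S" using i assms(4) by blast
      have "m s i = m (m i (m s i)) i" using ar[OF cl[OF s iS] iS] .
      thus ?thesis using Rm[OF iS Rm[OF cl[OF s iS] i]] by simp
    qed
    thus "left_ideal S m I" using assms(3,4) unfolding left_ideal_def set_prod_def by blast
  qed
qed

end
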